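(* Let $n$ training samples carry labels in $\{1,\dots,K\}$ with indicator matrix $F\in\mathbb{R}^{K\times n}$, with $n_k=n/K$ samples in each class $k$. Let the basis $G_1,\dots,G_r$ ($r\le n$) be a subset of the training samples with $r_k=r/K$ basis vectors in each class $k$, and let $F_{G_i}$ be the class indicator of $G_i$. Let $W\in\mathbb{R}^{r\times n}$ be entrywise nonnegative with positive column sums, $S=\operatorname{diag}(\mathbf{1}^TW)$, $\tilde W=WS^{-1}$ of full row rank, $X^*=F\tilde W^T(\tilde W\tilde W^T)^{-1}$, $F\tilde W^T\ne0$, and spectral risk $\gamma=\|X^*\|_F^2\|\tilde W\|_F^2/\|X^*\tilde W\|_F^2$. If $W_{ij}=0$ whenever $F_{G_i}\neq F_j$, then $K\le\gamma\le r$.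
   Context: The columns of $F$ are standard basis vectors of $\mathbb{R}^K$: $F_j=e_k$ iff sample $j$ is in class $k$. $W_{ij}$ is the similarity between basis vector $G_i$ and training sample $j$. *)

theory Defs
  imports "HOL-Analysis.Analysis"
begin

definition indicator_matrix :: "('n \<Rightarrow> 'k) \<Rightarrow> real^'n^'k" where
  "indicator_matrix lab = (\<chi> k j. if lab j = k then 1 else 0)"

definition colsum_diag :: "real^'n^'r \<Rightarrow> real^'n^'n" where
  "colsum_diag W = (\<chi> i j. if i = j then (\<Sum>l\<in>UNIV. W $ l $ j) else 0)"

definition frob2 :: "real^'n^'m \<Rightarrow> real" where
  "frob2 A = (\<Sum>i\<in>UNIV. \<Sum>j\<in>UNIV. (A $ i $ j)^2)"

end

theory Submission
  imports Defs
begin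

lemma matrix_inv_unique:
  fixes A B :: "real^'n^'n"
  assumes "A ** B = mat 1" "B ** A = mat 1"
  shows "matrix_inv A = B"
proof -
  have "\<exists>A'. A ** A' = mat 1 \<and> A' ** A = mat 1" using assms by blast
  then have M: "A ** matrix_inv A = mat 1 \<and> matrix_inv A ** A = mat 1"
    unfolding matrix_inv_def by (rule someI_ex)
  have "matrix_inv A = matrix_inv A ** (A ** B)" using assms by (simp add: matrix_mul_rid)
  also have "\<dots> = (matrix_inv A ** A) ** B" by (simp add: matrix_mul_assoc)
  also have "\<dots> = B" using M by (simp add: matrix_mul_lid)
  finally show ?thesis .
qed

lemma gram_invertible:
  fixes A :: "real^'n^'r"
  assumes "rank A = CARD('r)"
  shows "A ** transpose A ** matrix_inv (A ** transpose A) = mat 1"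
proof -
  have inj: "inj ((*v) (transpose A))"
    using full_rank_injective[of "transpose A"] rank_transpose[of A] assms by simp
  have ker: "\<forall>x. (A ** transpose A) *v x = 0 \<longrightarrow> x = 0"
  proof (intro allI impI)
    fix x :: "real^'r"
    assume h: "(A ** transpose A) *v x = 0"
    have "inner x (A *v (transpose A *v x)) = 0"
      using h by (simp only: matrix_vector_mul_assoc[symmetric] inner_zero_right)
    then have "inner (transpose A *v x) (transpose A *v x) = 0"
      by (metis dot_lmul_matrix transpose_matrix_vector vector_transpose_matrix transpose_transpose)
    then have "transpose A *v x = 0" by simp
    then show "x = 0" using inj
      by (metis injD matrix_vector_mult_0_right)
  qed
  then have "\<exists>B. B ** (A ** transpose A) = mat 1"
    using matrix_left_invertible_ker by blast
  then have inv: "invertible (A ** transpose A)"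
    using invertible_left_inverse by blast
  then obtain B where B: "(A ** transpose A) ** B = mat 1" "B ** (A ** transpose A) = mat 1"
    unfolding invertible_def by blast
  then show ?thesis using matrix_inv_unique by metis
qed


lemma sumsq_le_sq_sum:
  fixes a :: "'i::finite \<Rightarrow> real"
  assumes "\<And>i. a i \<ge> 0"
  shows "(\<Sum>i\<in>UNIV. (a i)^2) \<le> (\<Sum>i\<in>UNIV. a i)^2"
proof -
  have "(\<Sum>i\<in>UNIV. (a i)^2) \<le> (\<Sum>i\<in>UNIV. a i * (\<Sum>l\<in>UNIV. a l))"
  proof (rule sum_mono)
    fix i :: 'i
    have "a i \<le> (\<Sum>l\<in>UNIV. a l)"
      using member_le_sum[of i UNIV a] assms by auto
    then show "(a i)^2 \<le> a i * (\<Sum>l\<in>UNIV. a l)"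
      using assms[of i] by (simp add: power2_eq_square mult_left_mono)
  qed
  also have "\<dots> = (\<Sum>i\<in>UNIV. a i)^2"
    by (simp add: power2_eq_square sum_distrib_right)
  finally show ?thesis .
qed

theorem corollary1:
  fixes lab :: "'n::finite \<Rightarrow> 'k::finite"
    and b :: "'r::finite \<Rightarrow> 'n"
    and W :: "real^'n^'r"
  assumes class_size: "\<And>k. real (card {j. lab j = k}) = real CARD('n) / real CARD('k)"
    and basis_subset: "inj b"
    and basis_class_size: "\<And>k. real (card {i. lab (b i) = k}) = real CARD('r) / real CARD('k)"
    and W_nonneg: "\<And>i j. W $ i $ j \<ge> 0"
    and W_colsum_pos: "\<And>j. (\<Sum>i\<in>UNIV. W $ i $ j) > 0"
    and full_row_rank: "rank (W ** matrix_inv (colsum_diag W)) = CARD('r)"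
    and FWt_nonzero: "indicator_matrix lab ** transpose (W ** matrix_inv (colsum_diag W)) \<noteq> 0"
    and W_class: "\<And>i j. column (b i) (indicator_matrix lab) \<noteq> column j (indicator_matrix lab)
                          \<Longrightarrow> W $ i $ j = 0"
  shows "let F = indicator_matrix lab;
             Wt = W ** matrix_inv (colsum_diag W);
             X = F ** transpose Wt ** matrix_inv (Wt ** transpose Wt);
             \<gamma> = frob2 X * frob2 Wt / frob2 (X ** Wt)
         in real CARD('k) \<le> \<gamma> \<and> \<gamma> \<le> real CARD('r)"
proof -
  define F where "F = indicator_matrix lab"
  define c where "c j = (\<Sum>i\<in>UNIV. W $ i $ j)" for j
  define D :: "real^'n^'n" where "D = (\<chi> i j. if i = j then 1 / c j else 0)"
  define Wt where "Wt = W ** matrix_inv (colsum_diag W)"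
  define P :: "real^'r^'k" where "P = (\<chi> k i. if lab (b i) = k then 1 else 0)"
  define X where "X = F ** transpose Wt ** matrix_inv (Wt ** transpose Wt)"
  have cpos: "c j > 0" for j using W_colsum_pos unfolding c_def by blast
  have cne: "c j \<noteq> 0" for j using cpos[of j] by simp
  have SD: "colsum_diag W ** D = mat 1"
    using cne unfolding colsum_diag_def D_def c_def[symmetric]
    by (simp add: matrix_matrix_mult_def mat_def vec_eq_iff if_distrib[where f="\<lambda>x. _ * x"]
        cong: if_cong)
  have DS: "D ** colsum_diag W = mat 1"
    using cne unfolding colsum_diag_def D_def c_def[symmetric]
    by (simp add: matrix_matrix_mult_def mat_def vec_eq_iff if_distrib[where f="\<lambda>x. _ * x"]
        cong: if_cong)
  have invS: "matrix_inv (colsum_diag W) = D"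
    using matrix_inv_unique[OF SD DS] .
  have Wt_ent: "Wt $ i $ j = W $ i $ j / c j" for i j
    unfolding Wt_def invS D_def
    by (simp add: matrix_matrix_mult_def if_distrib[where f="\<lambda>x. _ * x"] cong: if_cong)
  have Wt_nonneg: "Wt $ i $ j \<ge> 0" for i j
    using W_nonneg[of i j] cpos[of j] by (simp add: Wt_ent)
  have Wt_col: "(\<Sum>i\<in>UNIV. Wt $ i $ j) = 1" for j
    using cpos[of j] by (simp add: Wt_ent flip: sum_divide_distrib c_def)
  have Wlab: "Wt $ i $ j = 0" if "lab (b i) \<noteq> lab j" for i j
  proof -
    have "column (b i) F $ lab j \<noteq> column j F $ lab j"
      using that by (simp add: F_def indicator_matrix_def column_def)
    then have "W $ i $ j = 0" using W_class unfolding F_def by metis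
    then show ?thesis by (simp add: Wt_ent)
  qed
  have FP: "F = P ** Wt"
  proof -
    have "(P ** Wt) $ k $ j = F $ k $ j" for k j
    proof -
      have "(P ** Wt) $ k $ j = (\<Sum>i\<in>UNIV. (if lab (b i) = k then 1 else 0) * Wt $ i $ j)"
        by (simp add: P_def matrix_matrix_mult_def)
      also have "\<dots> = (\<Sum>i\<in>UNIV. (if lab j = k then Wt $ i $ j else 0))"
        by (rule sum.cong) (use Wlab in auto)
      also have "\<dots> = F $ k $ j"
        using Wt_col by (simp add: F_def indicator_matrix_def)
      finally show ?thesis .
    qed
    then show ?thesis by (simp add: vec_eq_iff)
  qed
  have G: "Wt ** transpose Wt ** matrix_inv (Wt ** transpose Wt) = mat 1"
    using gram_invertible full_row_rank unfolding Wt_def by blast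
  have XP: "X = P"
  proof -
    have "X = P ** (Wt ** transpose Wt ** matrix_inv (Wt ** transpose Wt))"
      unfolding X_def FP by (simp add: matrix_mul_assoc)
    then show ?thesis using G by (simp add: matrix_mul_rid)
  qed
  have fP: "frob2 P = real CARD('r)"
  proof -
    have "frob2 P = (\<Sum>i\<in>UNIV. \<Sum>k\<in>UNIV. (P $ k $ i)^2)"
      unfolding frob2_def by (rule sum.swap)
    also have "\<dots> = (\<Sum>i\<in>(UNIV::'r set). 1)"
      by (rule sum.cong) (auto simp: P_def if_distrib[where f="\<lambda>x. x^2"] cong: if_cong)
    finally show ?thesis by simp
  qed
  have fF: "frob2 F = real CARD('n)"
  proof -
    have "frob2 F = (\<Sum>i\<in>UNIV. \<Sum>k\<in>UNIV. (F $ k $ i)^2)"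
      unfolding frob2_def by (rule sum.swap)
    also have "\<dots> = (\<Sum>i\<in>(UNIV::'n set). 1)"
      by (rule sum.cong) (auto simp: F_def indicator_matrix_def if_distrib[where f="\<lambda>x. x^2"] cong: if_cong)
    finally show ?thesis by simp
  qed
  define q where "q j = (\<Sum>i\<in>UNIV. (Wt $ i $ j)^2)" for j
  have fW: "frob2 Wt = (\<Sum>j\<in>UNIV. q j)"
    unfolding frob2_def q_def by (rule sum.swap)
  have qup: "q j \<le> 1" for j
    using sumsq_le_sq_sum[of "\<lambda>i. Wt $ i $ j"] Wt_nonneg Wt_col unfolding q_def by simp
  have Kpos: "real CARD('k) > 0" by simp
  have rpos: "real CARD('r) > 0" by simp
  have qlow: "q j \<ge> real CARD('k) / real CARD('r)" for j
  proof -
    define A where "A = {i. lab (b i) = lab j}"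
    have cA: "real (card A) = real CARD('r) / real CARD('k)"
      unfolding A_def by (rule basis_class_size)
    have cApos: "real (card A) > 0" using cA Kpos rpos by simp
    have "(\<Sum>i\<in>A. Wt $ i $ j) = (\<Sum>i\<in>UNIV. Wt $ i $ j)"
      by (rule sum.mono_neutral_left) (auto simp: A_def Wlab)
    then have s1: "(\<Sum>i\<in>A. Wt $ i $ j) = 1" using Wt_col by simp
    have "(\<Sum>i\<in>A. (Wt $ i $ j)^2) = q j"
      unfolding q_def by (rule sum.mono_neutral_left) (auto simp: A_def Wlab)
    then have "1 \<le> q j * real (card A)"
      using sum_squared_le_sum_of_squares[of "\<lambda>i. Wt $ i $ j" A] s1 by simp
    then show ?thesis using cA cApos Kpos rpos
      by (simp add: field_simps)
  qed
  have up: "frob2 Wt \<le> real CARD('n)"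
    using sum_mono[of UNIV q "\<lambda>_. 1"] qup fW by simp
  have low: "frob2 Wt \<ge> real CARD('n) * (real CARD('k) / real CARD('r))"
    using sum_mono[of UNIV "\<lambda>_. real CARD('k) / real CARD('r)" q] qlow fW by simp
  have XW: "X ** Wt = F" using XP FP by simp
  have npos: "real CARD('n) > 0" by simp
  have gam: "frob2 X * frob2 Wt / frob2 (X ** Wt) = real CARD('r) * frob2 Wt / real CARD('n)"
    using XW XP fP fF by simp
  have "real CARD('k) \<le> real CARD('r) * frob2 Wt / real CARD('n)"
    using low npos rpos by (simp add: field_simps)
  moreover have "real CARD('r) * frob2 Wt / real CARD('n) \<le> real CARD('r)"
    using up npos rpos by (simp add: field_simps)
  ultimately show ?thesis
    unfolding Let_def F_def[symmetric] Wt_def[symmetric] X_def[symmetric] gam by simp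
qed

end
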